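(* Let $|I|$ be a measurable cardinal, $\mathcal U$ a non-principal $\omega$-complete (countably complete) ultrafilter on $I$, and $\mathbb X_i=\langle X_i,\rho_i\rangle$ ($i\in I$) $L$-structures. Then the ultraproduct $\prod_{\mathcal U}\mathbb X_i$ is connected if and only if $\{i\in I:\mathbb X_i\text{ is connected}\}\in\mathcal U$.
   Context: $L$ is a language with one binary relation symbol; an $L$-structure is $\mathbb X=\langle X,\rho\rangle$, $X\neq\emptyset$, $\rho\subseteq X^2$. Connectivity is defined via the reflexivization $\rho_R=\rho\cup\{(x,x):x\in X\}$: $\mathbb X$ is connected iff for all $x,y\in X$ there are $n\in\omega$, $z_0,\dots,z_{n-1}\in X$ and $\epsilon\in\{0,1\}^{n+1}$ with $x\,\rho_R^{\epsilon_0}\,z_0\,\rho_R^{\epsilon_1}\cdots z_{n-1}\,\rho_R^{\epsilon_n}\,y$, where $\rho_R^0=\rho_R$ and $\rho_R^1=\rho_R^{-1}$. The ultraproduct $\prod_{\mathcal U}\mathbb X_i$ has universe $(\prod_i X_i)/\!\sim_{\mathcal U}$, where $x\sim_{\mathcal U}y$ iff $\{i:x_i=y_i\}\in\mathcal U$, and relation $[x]\,\rho\,[y]$ iff $\{i:x_i\,\rho_i\,y_i\}\in\mathcal U$. *)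

theory Defs
  imports "HOL-Library.Countable_Set"
begin

definition L_structure :: "'a set \<Rightarrow> ('a \<times> 'a) set \<Rightarrow> bool" where
  "L_structure X \<rho> \<longleftrightarrow> X \<noteq> {} \<and> \<rho> \<subseteq> X \<times> X"

definition reflz :: "'a set \<Rightarrow> ('a \<times> 'a) set \<Rightarrow> ('a \<times> 'a) set" where
  "reflz X \<rho> = \<rho> \<union> {(x, x) | x. x \<in> X}"

text \<open>One step a rho_R^e b, with e = False meaning exponent 0 (rho_R) and
  e = True meaning exponent 1 (converse of rho_R).\<close>
definition step_rel :: "('a \<times> 'a) set \<Rightarrow> bool \<Rightarrow> 'a \<Rightarrow> 'a \<Rightarrow> bool" where
  "step_rel R e a b \<longleftrightarrow> (if e then (b, a) \<in> R else (a, b) \<in> R)"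

definition connected_struct :: "'a set \<Rightarrow> ('a \<times> 'a) set \<Rightarrow> bool" where
  "connected_struct X \<rho> \<longleftrightarrow>
     (\<forall>x\<in>X. \<forall>y\<in>X. \<exists>zs eps. set zs \<subseteq> X \<and> length eps = length zs + 1 \<and>
        (let ps = x # zs @ [y] in
          \<forall>k < length zs + 1. step_rel (reflz X \<rho>) (eps ! k) (ps ! k) (ps ! Suc k)))"

text \<open>Ultrafilters on the index type 'i (I = UNIV), as families of subsets.\<close>
definition ultrafilter_on :: "'i set set \<Rightarrow> bool" where
  "ultrafilter_on U \<longleftrightarrow>
     UNIV \<in> U \<and> {} \<notin> U \<and>
     (\<forall>A B. A \<in> U \<and> A \<subseteq> B \<longrightarrow> B \<in> U) \<and>
     (\<forall>A B. A \<in> U \<and> B \<in> U \<longrightarrow> A \<inter> B \<in> U) \<and>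
     (\<forall>A. A \<in> U \<or> - A \<in> U)"

definition principal :: "'i set set \<Rightarrow> bool" where
  "principal U \<longleftrightarrow> (\<exists>i. U = {A. i \<in> A})"

definition countably_complete :: "'i set set \<Rightarrow> bool" where
  "countably_complete U \<longleftrightarrow> (\<forall>\<A>. \<A> \<subseteq> U \<and> countable \<A> \<longrightarrow> \<Inter>\<A> \<in> U)"

text \<open>|I| is a measurable cardinal (I = UNIV :: 'i set): I is uncountable and carries a
  non-principal |I|-complete ultrafilter, i.e. one closed under intersections of
  families of cardinality strictly less than |I| (no injection of I into the family).\<close>
definition measurable_cardinal_type :: "'i itself \<Rightarrow> bool" where
  "measurable_cardinal_type _ \<longleftrightarrow>
     \<not> countable (UNIV :: 'i set) \<and>
     (\<exists>V :: 'i set set. ultrafilter_on V \<and> \<not> principal V \<and>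
        (\<forall>\<A>. \<A> \<subseteq> V \<and> \<not> (\<exists>f :: 'i \<Rightarrow> 'i set. inj f \<and> range f \<subseteq> \<A>)
              \<longrightarrow> \<Inter>\<A> \<in> V))"

text \<open>Ultraproduct: universe is the product of the X_i modulo ~_U; [x] rho [y] iff
  {i. x_i rho_i y_i} is in U (independent of representatives).\<close>
definition up_eq :: "'i set set \<Rightarrow> ('i \<Rightarrow> 'a set) \<Rightarrow> (('i \<Rightarrow> 'a) \<times> ('i \<Rightarrow> 'a)) set" where
  "up_eq U X = {(x, y). x \<in> {x. \<forall>i. x i \<in> X i} \<and> y \<in> {x. \<forall>i. x i \<in> X i} \<and> {i. x i = y i} \<in> U}"

definition up_univ :: "'i set set \<Rightarrow> ('i \<Rightarrow> 'a set) \<Rightarrow> ('i \<Rightarrow> 'a) set set" where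
  "up_univ U X = {x. \<forall>i. x i \<in> X i} // up_eq U X"

definition up_rel :: "'i set set \<Rightarrow> ('i \<Rightarrow> 'a set) \<Rightarrow> ('i \<Rightarrow> ('a \<times> 'a) set)
                      \<Rightarrow> (('i \<Rightarrow> 'a) set \<times> ('i \<Rightarrow> 'a) set) set" where
  "up_rel U X \<rho> = {(A, B). A \<in> up_univ U X \<and> B \<in> up_univ U X \<and>
       (\<exists>x\<in>A. \<exists>y\<in>B. {i. (x i, y i) \<in> \<rho> i} \<in> U)}"

end

theory Submission
  imports Defs
begin

lemma uf_mono: "ultrafilter_on U \<Longrightarrow> A \<in> U \<Longrightarrow> A \<subseteq> B \<Longrightarrow> B \<in> U"
  unfolding ultrafilter_on_def by blast

lemma uf_int: "ultrafilter_on U \<Longrightarrow> A \<in> U \<Longrightarrow> B \<in> U \<Longrightarrow> A \<inter> B \<in> U"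
  unfolding ultrafilter_on_def by blast

lemma uf_empty: "ultrafilter_on U \<Longrightarrow> {} \<notin> U"
  unfolding ultrafilter_on_def by blast

lemma uf_UNIV: "ultrafilter_on U \<Longrightarrow> UNIV \<in> U"
  unfolding ultrafilter_on_def by blast

lemma uf_compl: "ultrafilter_on U \<Longrightarrow> A \<notin> U \<Longrightarrow> - A \<in> U"
  unfolding ultrafilter_on_def by blast

lemma uf_union:
  assumes "ultrafilter_on U" "A \<union> B \<in> U" shows "A \<in> U \<or> B \<in> U"
proof (rule ccontr)
  assume "\<not> (A \<in> U \<or> B \<in> U)"
  then have "- A \<in> U" "- B \<in> U" using uf_compl assms by auto
  then have "(A \<union> B) \<inter> (- A \<inter> - B) \<in> U" using uf_int assms by metis
  moreover have "(A \<union> B) \<inter> (- A \<inter> - B) = {}" by blast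
  ultimately show False using uf_empty assms by metis
qed

lemma uf_pigeon:
  assumes "ultrafilter_on U" "countably_complete U" "S \<in> U"
  shows "\<exists>v::'b::countable. {i\<in>S. f i = v} \<in> U"
proof (rule ccontr)
  assume "\<not> ?thesis"
  then have h: "\<forall>v. - {i\<in>S. f i = v} \<in> U" using uf_compl assms by blast
  let ?A = "insert S (range (\<lambda>v::'b. - {i\<in>S. f i = v}))"
  have "countable ?A" by simp
  moreover have "?A \<subseteq> U" using h assms by auto
  ultimately have "\<Inter>?A \<in> U" using assms(2) unfolding countably_complete_def by blast
  moreover have "\<Inter>?A = {}" by auto
  ultimately show False using uf_empty assms by metis
qed

lemma equiv_E:
  assumes "ultrafilter_on U"
  shows "equiv {x. \<forall>i. x i \<in> X i} (up_eq U X)"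
proof -
  have un: "UNIV \<in> U" using uf_UNIV assms by blast
  have tr: "{i. x i = z i} \<in> U" if "{i. x i = y i} \<in> U" "{i. y i = z i} \<in> U" for x y z
    by (rule uf_mono[OF assms uf_int[OF assms that]]) auto
  have sy: "{i. y i = x i} \<in> U" if "{i. x i = y i} \<in> U" for x y
    by (rule uf_mono[OF assms that]) auto
  have "refl_on {x. \<forall>i. x i \<in> X i} (up_eq U X)"
    unfolding refl_on_def up_eq_def using un by auto
  moreover have "sym (up_eq U X)"
    unfolding sym_def up_eq_def using sy by blast
  moreover have "trans (up_eq U X)"
    unfolding trans_def up_eq_def using tr by blast
  moreover have "up_eq U X \<subseteq> {x. \<forall>i. x i \<in> X i} \<times> {x. \<forall>i. x i \<in> X i}"
    unfolding up_eq_def by auto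
  ultimately show ?thesis unfolding equiv_def by blast
qed

lemma cls_eq:
  assumes "ultrafilter_on U" "p \<in> {x. \<forall>i. x i \<in> X i}" "q \<in> {x. \<forall>i. x i \<in> X i}"
  shows "(up_eq U X `` {p} = up_eq U X `` {q}) \<longleftrightarrow> {i. p i = q i} \<in> U"
proof -
  have "(up_eq U X `` {p} = up_eq U X `` {q}) \<longleftrightarrow> (p, q) \<in> up_eq U X"
    using eq_equiv_class_iff[OF equiv_E[OF assms(1)] assms(2,3)] .
  also have "\<dots> \<longleftrightarrow> {i. p i = q i} \<in> U" using assms(2,3) by (simp add: up_eq_def)
  finally show ?thesis .
qed

lemma cls_mem:
  assumes "ultrafilter_on U" "p \<in> {x. \<forall>i. x i \<in> X i}"
  shows "up_eq U X `` {p} \<in> up_univ U X"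
  using assms unfolding up_univ_def by (simp add: quotientI)

lemma cls_self:
  assumes "ultrafilter_on U" "p \<in> {x. \<forall>i. x i \<in> X i}"
  shows "p \<in> up_eq U X `` {p}"
  using equiv_class_self[OF equiv_E[OF assms(1)] assms(2)] .

lemma to_reflz:
  assumes "ultrafilter_on U" "p \<in> {x. \<forall>i. x i \<in> X i}" "q \<in> {x. \<forall>i. x i \<in> X i}"
    "{i. (p i, q i) \<in> reflz (X i) (\<rho> i)} \<in> U"
  shows "(up_eq U X `` {p}, up_eq U X `` {q}) \<in> reflz (up_univ U X) (up_rel U X \<rho>)"
proof -
  have "{i. (p i, q i) \<in> reflz (X i) (\<rho> i)} \<subseteq> {i. (p i, q i) \<in> \<rho> i} \<union> {i. p i = q i}"
    unfolding reflz_def by auto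
  then have "{i. (p i, q i) \<in> \<rho> i} \<union> {i. p i = q i} \<in> U" by (rule uf_mono[OF assms(1,4)])
  then have "{i. (p i, q i) \<in> \<rho> i} \<in> U \<or> {i. p i = q i} \<in> U" by (rule uf_union[OF assms(1)])
  then show ?thesis
  proof
    assume "{i. (p i, q i) \<in> \<rho> i} \<in> U"
    then have "(up_eq U X `` {p}, up_eq U X `` {q}) \<in> up_rel U X \<rho>"
      unfolding up_rel_def mem_Collect_eq prod.case
      using cls_mem[OF assms(1,2)] cls_mem[OF assms(1,3)]
        cls_self[OF assms(1,2)] cls_self[OF assms(1,3)] by (intro conjI bexI)
    then show ?thesis unfolding reflz_def by (rule UnI1)
  next
    assume "{i. p i = q i} \<in> U"
    then have e: "up_eq U X `` {p} = up_eq U X `` {q}" using cls_eq[OF assms(1,2,3)] by simp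
    have "(up_eq U X `` {p}, up_eq U X `` {p}) \<in> reflz (up_univ U X) (up_rel U X \<rho>)"
      unfolding reflz_def using cls_mem[OF assms(1,2)] by blast
    then show ?thesis using e by simp
  qed
qed

lemma from_reflz:
  assumes "ultrafilter_on U" "p \<in> {x. \<forall>i. x i \<in> X i}" "q \<in> {x. \<forall>i. x i \<in> X i}"
    "(up_eq U X `` {p}, up_eq U X `` {q}) \<in> reflz (up_univ U X) (up_rel U X \<rho>)"
  shows "{i. (p i, q i) \<in> reflz (X i) (\<rho> i)} \<in> U"
proof -
  have "(up_eq U X `` {p}, up_eq U X `` {q}) \<in> up_rel U X \<rho> \<or> up_eq U X `` {p} = up_eq U X `` {q}"
    using assms(4) unfolding reflz_def by blast
  then show ?thesis
  proof
    assume "(up_eq U X `` {p}, up_eq U X `` {q}) \<in> up_rel U X \<rho>"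
    then obtain x y where x: "x \<in> up_eq U X `` {p}" and y: "y \<in> up_eq U X `` {q}"
      and r: "{i. (x i, y i) \<in> \<rho> i} \<in> U" unfolding up_rel_def by blast
    have 1: "{i. p i = x i} \<in> U" using x unfolding up_eq_def by simp
    have 2: "{i. q i = y i} \<in> U" using y unfolding up_eq_def by simp
    have "{i. p i = x i} \<inter> {i. q i = y i} \<inter> {i. (x i, y i) \<in> \<rho> i} \<in> U"
      using uf_int[OF assms(1) uf_int[OF assms(1) 1 2] r] .
    then show ?thesis by (rule uf_mono[OF assms(1)]) (auto simp: reflz_def)
  next
    assume "up_eq U X `` {p} = up_eq U X `` {q}"
    then have "{i. p i = q i} \<in> U" using cls_eq[OF assms(1,2,3)] by simp
    then show ?thesis by (rule uf_mono[OF assms(1)]) (use assms(2) in \<open>auto simp: reflz_def\<close>)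
  qed
qed

lemma to_step:
  assumes "ultrafilter_on U" "p \<in> {x. \<forall>i. x i \<in> X i}" "q \<in> {x. \<forall>i. x i \<in> X i}"
    "{i. step_rel (reflz (X i) (\<rho> i)) e (p i) (q i)} \<in> U"
  shows "step_rel (reflz (up_univ U X) (up_rel U X \<rho>)) e (up_eq U X `` {p}) (up_eq U X `` {q})"
proof (cases e)
  case True
  then have "{i. (q i, p i) \<in> reflz (X i) (\<rho> i)} \<in> U" using assms(4) by (simp add: step_rel_def)
  from to_reflz[OF assms(1,3,2) this] True show ?thesis by (simp add: step_rel_def)
next
  case False
  then have "{i. (p i, q i) \<in> reflz (X i) (\<rho> i)} \<in> U" using assms(4) by (simp add: step_rel_def)
  from to_reflz[OF assms(1,2,3) this] False show ?thesis by (simp add: step_rel_def)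
qed

lemma from_step:
  assumes "ultrafilter_on U" "p \<in> {x. \<forall>i. x i \<in> X i}" "q \<in> {x. \<forall>i. x i \<in> X i}"
    "step_rel (reflz (up_univ U X) (up_rel U X \<rho>)) e (up_eq U X `` {p}) (up_eq U X `` {q})"
  shows "{i. step_rel (reflz (X i) (\<rho> i)) e (p i) (q i)} \<in> U"
proof (cases e)
  case True
  then have "(up_eq U X `` {q}, up_eq U X `` {p}) \<in> reflz (up_univ U X) (up_rel U X \<rho>)"
    using assms(4) by (simp add: step_rel_def)
  from from_reflz[OF assms(1,3,2) this] True show ?thesis by (simp add: step_rel_def)
next
  case False
  then have "(up_eq U X `` {p}, up_eq U X `` {q}) \<in> reflz (up_univ U X) (up_rel U X \<rho>)"
    using assms(4) by (simp add: step_rel_def)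
  from from_reflz[OF assms(1,2,3) this] False show ?thesis by (simp add: step_rel_def)
qed

lemma list_idx:
  assumes "k \<le> n + 1"
  shows "(a # map (\<lambda>j. f (Suc j)) [0..<n] @ [b]) ! k = (if k = 0 then a else if k \<le> n then f k else b)"
proof (cases k)
  case 0 then show ?thesis by simp
next
  case (Suc m)
  then show ?thesis using assms by (auto simp: nth_append)
qed


lemma conn_intro:
  assumes "\<And>a b. a \<in> S \<Longrightarrow> b \<in> S \<Longrightarrow> \<exists>zs eps. set zs \<subseteq> S \<and> length eps = length zs + 1 \<and>
     (\<forall>k<length zs + 1. step_rel (reflz S r) (eps ! k) ((a # zs @ [b]) ! k) ((a # zs @ [b]) ! Suc k))"
  shows "connected_struct S r"
  unfolding connected_struct_def Let_def by (intro ballI assms)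

theorem theorem2p7:
  fixes U :: "'i set set" and X :: "'i \<Rightarrow> 'a set" and \<rho> :: "'i \<Rightarrow> ('a \<times> 'a) set"
  assumes "measurable_cardinal_type TYPE('i)"
    and "ultrafilter_on U" and "\<not> principal U" and "countably_complete U"
    and "\<And>i. L_structure (X i) (\<rho> i)"
  shows "connected_struct (up_univ U X) (up_rel U X \<rho>) \<longleftrightarrow>
         {i. connected_struct (X i) (\<rho> i)} \<in> U"
proof -
  note uf = assms(2)
  define P where "P = {x. \<forall>i. x i \<in> X i}"
  define E where "E = up_eq U X"
  define C where "C = {i. connected_struct (X i) (\<rho> i)}"
  define Q where "Q = (\<lambda>i a b zs eps. set zs \<subseteq> X i \<and> length eps = length zs + 1 \<and>
        (let ps = a # zs @ [b] in
          \<forall>k < length zs + 1. step_rel (reflz (X i) (\<rho> i)) (eps ! k) (ps ! k) (ps ! Suc k)))"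
  have Cdef: "\<And>i. i \<in> C \<longleftrightarrow> (\<forall>a\<in>X i. \<forall>b\<in>X i. \<exists>zs eps. Q i a b zs eps)"
    unfolding C_def Q_def connected_struct_def mem_Collect_eq by (rule refl)
  have ne: "X i \<noteq> {}" for i using assms(5)[of i] unfolding L_structure_def by simp
  have univE: "\<exists>x\<in>P. A = E `` {x}" if hA: "A \<in> up_univ U X" for A
  proof -
    obtain x where x2: "A = up_eq U X `` {x}" and x1: "x \<in> {x. \<forall>i. x i \<in> X i}"
      by (rule quotientE[OF hA[unfolded up_univ_def]])
    show ?thesis
    proof (rule bexI)
      show "A = E `` {x}" using x2 by (simp add: E_def)
      show "x \<in> P" using x1 by (simp add: P_def)
    qed
  qed
  show ?thesis
  proof
    assume conn: "connected_struct (up_univ U X) (up_rel U X \<rho>)"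
    show "{i. connected_struct (X i) (\<rho> i)} \<in> U" unfolding C_def[symmetric]
    proof (rule ccontr)
      assume "C \<notin> U"
      then have nC: "- C \<in> U" using uf_compl uf by blast
      have "\<forall>i. \<exists>ab. fst ab \<in> X i \<and> snd ab \<in> X i \<and> (i \<notin> C \<longrightarrow> \<not> (\<exists>zs eps. Q i (fst ab) (snd ab) zs eps))"
      proof
        fix i
        show "\<exists>ab. fst ab \<in> X i \<and> snd ab \<in> X i \<and> (i \<notin> C \<longrightarrow> \<not> (\<exists>zs eps. Q i (fst ab) (snd ab) zs eps))"
        proof (cases "i \<in> C")
          case True
          obtain a where "a \<in> X i" using ne by blast
          then show ?thesis using True by (intro exI[of _ "(a, a)"]) auto
        next
          case False
          then obtain a b where "a \<in> X i" "b \<in> X i" "\<not> (\<exists>zs eps. Q i a b zs eps)"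
            using Cdef by blast
          then show ?thesis by (intro exI[of _ "(a, b)"]) auto
        qed
      qed
      then obtain g where g0: "\<forall>i. fst (g i) \<in> X i \<and> snd (g i) \<in> X i \<and> (i \<notin> C \<longrightarrow> \<not> (\<exists>zs eps. Q i (fst (g i)) (snd (g i)) zs eps))"
        by (rule choice[THEN exE])
      have g: "\<And>i. fst (g i) \<in> X i \<and> snd (g i) \<in> X i \<and> (i \<notin> C \<longrightarrow> \<not> (\<exists>zs eps. Q i (fst (g i)) (snd (g i)) zs eps))"
        using g0 by blast
      define x where "x = (\<lambda>i. fst (g i))"
      define y where "y = (\<lambda>i. snd (g i))"
      have xP: "x \<in> P" and yP: "y \<in> P" using g unfolding P_def x_def y_def by auto
      have mx: "E `` {x} \<in> up_univ U X" using cls_mem[OF uf, of x X] xP unfolding P_def E_def by simp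
      have my: "E `` {y} \<in> up_univ U X" using cls_mem[OF uf, of y X] yP unfolding P_def E_def by simp
      have "\<exists>zs eps. set zs \<subseteq> up_univ U X \<and> length eps = length zs + 1 \<and>
          (\<forall>k<length zs + 1. step_rel (reflz (up_univ U X) (up_rel U X \<rho>)) (eps ! k)
             ((E `` {x} # zs @ [E `` {y}]) ! k) ((E `` {x} # zs @ [E `` {y}]) ! Suc k))"
        using conn[unfolded connected_struct_def Let_def, rule_format, OF mx my] .
      then obtain zs eps where zs: "set zs \<subseteq> up_univ U X" and leps: "length eps = length zs + 1"
        and st0: "\<forall>k<length zs + 1. step_rel (reflz (up_univ U X) (up_rel U X \<rho>)) (eps ! k)
             ((E `` {x} # zs @ [E `` {y}]) ! k) ((E `` {x} # zs @ [E `` {y}]) ! Suc k)"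
        by blast
      have st: "\<And>k. k < length zs + 1 \<Longrightarrow> step_rel (reflz (up_univ U X) (up_rel U X \<rho>)) (eps ! k)
             ((E `` {x} # zs @ [E `` {y}]) ! k) ((E `` {x} # zs @ [E `` {y}]) ! Suc k)"
        using st0 by blast
      define n where "n = length zs"
      have "\<forall>j. \<exists>r. j < n \<longrightarrow> r \<in> P \<and> zs ! j = E `` {r}"
      proof
        fix j
        show "\<exists>r. j < n \<longrightarrow> r \<in> P \<and> zs ! j = E `` {r}"
        proof (cases "j < n")
          case True
          then have "zs ! j \<in> up_univ U X" using zs unfolding n_def by (simp add: subset_iff)
          then show ?thesis using univE by blast
        qed simp
      qed
      then obtain r where r0: "\<forall>j. j < n \<longrightarrow> r j \<in> P \<and> zs ! j = E `` {r j}"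
        by (rule choice[THEN exE])
      have r: "\<And>j. j < n \<Longrightarrow> r j \<in> P \<and> zs ! j = E `` {r j}" using r0 by blast
      define W where "W = (\<lambda>k. if k = 0 then x else if k \<le> n then r (k - 1) else y)"
      have WP: "\<And>k. W k \<in> P" using xP yP r unfolding W_def by auto
      have zs_eq: "zs = map (\<lambda>j. E `` {W (Suc j)}) [0..<n]"
        by (rule nth_equalityI) (auto simp: n_def W_def r)
      have ps: "\<And>k. k \<le> n + 1 \<Longrightarrow> (E `` {x} # zs @ [E `` {y}]) ! k = E `` {W k}"
        unfolding zs_eq by (subst list_idx[where f = "\<lambda>k. E `` {W k}"]) (auto simp: W_def)
      have S: "\<And>k. k < n + 1 \<Longrightarrow> {i. step_rel (reflz (X i) (\<rho> i)) (eps ! k) (W k i) (W (Suc k) i)} \<in> U"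
      proof -
        fix k assume k: "k < n + 1"
        show "?thesis k"
          using from_step[OF uf, of "W k" X "W (Suc k)" \<rho> "eps ! k"] WP st[of k] ps[of k] ps[of "Suc k"] k
          unfolding P_def E_def n_def by simp
      qed
      define F where "F = insert (- C) ((\<lambda>k. {i. step_rel (reflz (X i) (\<rho> i)) (eps ! k) (W k i) (W (Suc k) i)}) ` {..<n+1})"
      have "countable F" unfolding F_def by simp
      moreover have "F \<subseteq> U" unfolding F_def using nC S by auto
      ultimately have "\<Inter>F \<in> U" using assms(4) unfolding countably_complete_def by blast
      then obtain i where i: "i \<in> \<Inter>F" using uf_empty[OF uf] by (metis ex_in_conv)
      then have iC: "i \<notin> C" unfolding F_def by auto
      have si: "\<And>k. k < n + 1 \<Longrightarrow> step_rel (reflz (X i) (\<rho> i)) (eps ! k) (W k i) (W (Suc k) i)"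
        using i unfolding F_def by auto
      define zs' where "zs' = map (\<lambda>j. W (Suc j) i) [0..<n]"
      have pi: "\<And>k. k \<le> n + 1 \<Longrightarrow> (x i # zs' @ [y i]) ! k = W k i"
        unfolding zs'_def by (subst list_idx[where f = "\<lambda>k. W k i"]) (auto simp: W_def)
      have "Q i (x i) (y i) zs' eps"
        unfolding Q_def Let_def
      proof (intro conjI allI impI)
        show "set zs' \<subseteq> X i" using WP unfolding zs'_def P_def by auto
        show "length eps = length zs' + 1" using leps unfolding zs'_def n_def by simp
        fix k assume "k < length zs' + 1"
        then have k: "k < n + 1" unfolding zs'_def by simp
        show "step_rel (reflz (X i) (\<rho> i)) (eps ! k) ((x i # zs' @ [y i]) ! k) ((x i # zs' @ [y i]) ! Suc k)"
          using si[OF k] pi[of k] pi[of "Suc k"] k by simp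
      qed
      then show False using g[of i] iC unfolding x_def y_def by blast
    qed
  next
    assume "{i. connected_struct (X i) (\<rho> i)} \<in> U"
    then have CU: "C \<in> U" unfolding C_def .
    show "connected_struct (up_univ U X) (up_rel U X \<rho>)"
    proof (rule conn_intro)
      fix A B assume A: "A \<in> up_univ U X" and B: "B \<in> up_univ U X"
      obtain x where xP: "x \<in> P" and Ax: "A = E `` {x}" using univE A by blast
      obtain y where yP: "y \<in> P" and By: "B = E `` {y}" using univE B by blast
      have "\<forall>i. \<exists>ze. i \<in> C \<longrightarrow> Q i (x i) (y i) (fst ze) (snd ze)"
      proof
        fix i
        show "\<exists>ze. i \<in> C \<longrightarrow> Q i (x i) (y i) (fst ze) (snd ze)"
        proof (cases "i \<in> C")
          case True
          have "x i \<in> X i" "y i \<in> X i" using xP yP unfolding P_def by auto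
          then obtain zs eps where "Q i (x i) (y i) zs eps" using True Cdef by blast
          then show ?thesis by (intro exI[of _ "(zs, eps)"]) simp
        qed simp
      qed
      then obtain g where g0: "\<forall>i. i \<in> C \<longrightarrow> Q i (x i) (y i) (fst (g i)) (snd (g i))"
        by (rule choice[THEN exE])
      have g: "\<And>i. i \<in> C \<Longrightarrow> Q i (x i) (y i) (fst (g i)) (snd (g i))" using g0 by blast
      obtain v :: "nat \<times> bool list" where G: "{i\<in>C. (length (fst (g i)), snd (g i)) = v} \<in> U"
        using uf_pigeon[OF uf assms(4) CU, of "\<lambda>i. (length (fst (g i)), snd (g i))"] by blast
      define G where "G = {i\<in>C. (length (fst (g i)), snd (g i)) = v}"
      define n where "n = fst v"
      define e where "e = snd v"
      have GU: "G \<in> U" using G unfolding G_def .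
      have Gn: "\<And>i. i \<in> G \<Longrightarrow> length (fst (g i)) = n \<and> snd (g i) = e \<and> i \<in> C"
        unfolding G_def n_def e_def by auto
      obtain i0 where i0: "i0 \<in> G" using GU uf_empty[OF uf] by (metis ex_in_conv)
      define W where "W = (\<lambda>k i. if i \<in> G then (x i # fst (g i) @ [y i]) ! k else x i)"
      have Wi: "\<And>k i. i \<in> G \<Longrightarrow> k \<le> n + 1 \<Longrightarrow> W k i \<in> X i"
      proof -
        fix k i assume iG: "i \<in> G" and k: "k \<le> n + 1"
        have sub: "set (x i # fst (g i) @ [y i]) \<subseteq> X i"
          using g[of i] Gn[OF iG] xP yP unfolding Q_def P_def by auto
        have "k < length (x i # fst (g i) @ [y i])" using Gn[OF iG] k by simp
        then have "(x i # fst (g i) @ [y i]) ! k \<in> X i" using sub nth_mem by blast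
        then show "W k i \<in> X i" unfolding W_def using iG by simp
      qed
      have WP: "\<And>k. k \<le> n + 1 \<Longrightarrow> W k \<in> P"
        unfolding P_def using Wi xP unfolding W_def P_def by auto
      define zs where "zs = map (\<lambda>j. E `` {W (Suc j)}) [0..<n]"
      have W0: "W 0 = x" unfolding W_def by auto
      have Wn: "E `` {y} = E `` {W (Suc n)}"
      proof -
        have "G \<subseteq> {i. y i = W (Suc n) i}"
          using Gn unfolding W_def by (auto simp: nth_append)
        then have "{i. y i = W (Suc n) i} \<in> U" using uf_mono[OF uf GU] by blast
        then show ?thesis using cls_eq[OF uf, of y X "W (Suc n)"] yP WP[of "Suc n"]
          unfolding P_def E_def by simp
      qed
      have ps: "(E `` {x} # zs @ [E `` {y}]) ! k = E `` {W k}" if k: "k \<le> n + 1" for k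
      proof -
        have "(E `` {x} # zs @ [E `` {y}]) ! k = (if k = 0 then E `` {x} else if k \<le> n then E `` {W k} else E `` {y})"
          unfolding zs_def by (rule list_idx[OF k])
        moreover have "\<not> k \<le> n \<Longrightarrow> k = Suc n" using k by simp
        ultimately show ?thesis using W0 Wn by auto
      qed
      show "\<exists>zs eps. set zs \<subseteq> up_univ U X \<and> length eps = length zs + 1 \<and>
          (\<forall>k<length zs + 1. step_rel (reflz (up_univ U X) (up_rel U X \<rho>)) (eps ! k)
             ((A # zs @ [B]) ! k) ((A # zs @ [B]) ! Suc k))"
      proof (intro exI conjI allI impI)
        show "set zs \<subseteq> up_univ U X"
        proof
          fix Z assume "Z \<in> set zs"
          then obtain j where j: "j < n" and Zj: "Z = E `` {W (Suc j)}" unfolding zs_def by auto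
          have "W (Suc j) \<in> P" using WP j by simp
          then show "Z \<in> up_univ U X" using cls_mem[OF uf, of "W (Suc j)" X] Zj
            unfolding P_def E_def by simp
        qed
        show "length e = length zs + 1"
          using g[of i0] Gn[OF i0] unfolding zs_def Q_def by simp
        fix k assume "k < length zs + 1"
        then have k: "k < n + 1" unfolding zs_def by simp
        have "G \<subseteq> {i. step_rel (reflz (X i) (\<rho> i)) (e ! k) (W k i) (W (Suc k) i)}"
        proof
          fix i assume iG: "i \<in> G"
          have "step_rel (reflz (X i) (\<rho> i)) (snd (g i) ! k)
             ((x i # fst (g i) @ [y i]) ! k) ((x i # fst (g i) @ [y i]) ! Suc k)"
            using g[of i] Gn[OF iG] k unfolding Q_def Let_def by auto
          then show "i \<in> {i. step_rel (reflz (X i) (\<rho> i)) (e ! k) (W k i) (W (Suc k) i)}"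
            using Gn[OF iG] iG unfolding W_def by simp
        qed
        then have "{i. step_rel (reflz (X i) (\<rho> i)) (e ! k) (W k i) (W (Suc k) i)} \<in> U"
          using uf_mono[OF uf GU] by blast
        then have "step_rel (reflz (up_univ U X) (up_rel U X \<rho>)) (e ! k) (E `` {W k}) (E `` {W (Suc k)})"
          using to_step[OF uf, of "W k" X "W (Suc k)"] WP[of k] WP[of "Suc k"] k
          unfolding P_def E_def by simp
        then show "step_rel (reflz (up_univ U X) (up_rel U X \<rho>)) (e ! k)
             ((A # zs @ [B]) ! k) ((A # zs @ [B]) ! Suc k)"
          using ps[of k] ps[of "Suc k"] k Ax By by simp
      qed
    qed
  qed
qed

end
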